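(* Let $p$ be an odd prime, $m$ and $u$ positive integers, $q=p^m$, and $v=\gcd(m,u)$. If $\frac{m}{v}\equiv 0\pmod 4$, then \[ \left|\{c\in\mathbb{F}_q : \text{the equation } X^{p^{2u}}+X=c^{p^u} \text{ has a solution } X\in\mathbb{F}_q\}\right| = p^{m-2v}. \] *)

theory Defs
  imports "HOL-Computational_Algebra.Primes"
begin

end

theory Submission imports Defs "HOL-Number_Theory.Residues" "HOL-Computational_Algebra.Polynomial" begin

lemma char_eq:
  assumes "card (UNIV :: 'a::{field,finite} set) = p ^ m" "prime p" "m > 0"
  shows "CHAR('a) = p"
proof -
  have pc: "prime CHAR('a)"
    using prime_CHAR_semidom finite_imp_CHAR_pos by (metis finite_UNIV)
  have "CHAR('a) dvd p ^ m" using CHAR_dvd_CARD[where 'a='a] assms(1) by simp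
  hence "CHAR('a) dvd p" using pc prime_dvd_power by blast
  thus ?thesis using pc assms(2) by (simp add: primes_dvd_imp_eq)
qed

lemma fermat_ff:
  fixes x :: "'a::{field,finite}"
  shows "x ^ card (UNIV :: 'a set) = x"
proof (cases "x = 0")
  case False
  have "x * (\<Prod>y\<in>UNIV-{0}. x * y) = x * x ^ (card (UNIV :: 'a set) - 1) * \<Prod>(UNIV-{0})"
    by (simp add: prod.distrib mult_ac)
  also have "x * x ^ (card (UNIV :: 'a set) - 1) = x ^ Suc (card (UNIV :: 'a set) - 1)"
    by (subst power_Suc) auto
  also have "Suc (card (UNIV :: 'a set) - 1) = card (UNIV :: 'a set)"
    using finite_UNIV_card_ge_0[where ?'a = 'a] by simp
  also have "(\<Prod>y\<in>UNIV-{0}. x * y) = (\<Prod>y\<in>UNIV-{0}. y)"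
    by (rule prod.reindex_bij_witness[of _ "\<lambda>y. y / x" "\<lambda>y. x * y"]) (use False in auto)
  finally show ?thesis
    by simp
qed (use finite_UNIV_card_ge_0[where ?'a = 'a] in auto)

lemma ker_im:
  fixes f :: "'a::{ab_group_add,finite} \<Rightarrow> 'b::ab_group_add"
  assumes add: "\<And>x y. f (x + y) = f x + f y"
  shows "card (UNIV :: 'a set) = card (range f) * card {x. f x = 0}"
proof -
  have f0: "f 0 = 0" using add[of 0 0] by simp
  have fd: "f (x - y) = f x - f y" for x y
    using add[of "x - y" y] by (simp add: algebra_simps)
  define s where "s = (\<lambda>y. inv_into UNIV f y)"
  have fs: "y \<in> range f \<Longrightarrow> f (s y) = y" for y unfolding s_def by (simp add: f_inv_into_f)
  have "bij_betw (\<lambda>x. (f x, x - s (f x))) UNIV (range f \<times> {x. f x = 0})"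
    by (rule bij_betw_byWitness[where f' = "\<lambda>(y, k). s y + k"]) (use fs fd add in auto)
  hence "card (UNIV :: 'a set) = card (range f \<times> {x. f x = 0})" by (rule bij_betw_same_card)
  thus ?thesis by (simp add: card_cartesian_product)
qed


lemma fr_add:
  fixes x y :: "'a::{field,finite}"
  assumes "prime CHAR('a)"
  shows "(x + y) ^ (CHAR('a) ^ k) = x ^ (CHAR('a) ^ k) + y ^ (CHAR('a) ^ k)"
  using freshmans_dream'[OF assms refl] .

lemma fr_neg:
  fixes x :: "'a::{field,finite}"
  assumes "odd CHAR('a)"
  shows "(- x) ^ (CHAR('a) ^ k) = - (x ^ (CHAR('a) ^ k))"
  using assms by (intro power_minus_odd) simp

lemma fr_diff:
  fixes x y :: "'a::{field,finite}"
  assumes "prime CHAR('a)" "odd CHAR('a)"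
  shows "(x - y) ^ (CHAR('a) ^ k) = x ^ (CHAR('a) ^ k) - y ^ (CHAR('a) ^ k)"
  using fr_add[OF assms(1), of x "-y" k] fr_neg[OF assms(2), of y k] by simp

lemma fr_inj:
  fixes x y :: "'a::{field,finite}"
  assumes "prime CHAR('a)" "odd CHAR('a)" "x ^ (CHAR('a) ^ k) = y ^ (CHAR('a) ^ k)"
  shows "x = y"
proof -
  have "(x - y) ^ (CHAR('a) ^ k) = 0" using fr_diff[OF assms(1,2)] assms(3) by simp
  thus ?thesis by simp
qed

lemma fr_comp:
  fixes x :: "'a::{field,finite}"
  shows "x ^ (CHAR('a) ^ (a + b)) = (x ^ (CHAR('a) ^ a)) ^ (CHAR('a) ^ b)"
  by (simp add: power_add power_mult)

lemma fr_mult_fix: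
  fixes x :: "'a::{field,finite}"
  assumes "x ^ (CHAR('a) ^ a) = x"
  shows "x ^ (CHAR('a) ^ (j * a)) = x"
proof (induction j)
  case (Suc j)
  have "x ^ (CHAR('a) ^ (Suc j * a)) = (x ^ (CHAR('a) ^ (j * a))) ^ (CHAR('a) ^ a)"
    using fr_comp[of x "j * a" a] by (simp add: add.commute)
  thus ?case using Suc assms by simp
qed simp

lemma fix_gcd:
  fixes x :: "'a::{field,finite}"
  assumes "x ^ (CHAR('a) ^ a) = x" "x ^ (CHAR('a) ^ b) = x"
  shows "x ^ (CHAR('a) ^ (gcd a b)) = x"
proof (cases "a = 0")
  case True thus ?thesis using assms by simp
next
  case False
  then obtain s t where st: "a * s = b * t + gcd a b" using bezout_nat by blast
  have "x = x ^ (CHAR('a) ^ (s * a))" using fr_mult_fix[OF assms(1)] by simp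
  also have "\<dots> = (x ^ (CHAR('a) ^ (t * b))) ^ (CHAR('a) ^ gcd a b)"
    using st fr_comp[of x "t * b" "gcd a b"] by (simp add: mult.commute)
  also have "\<dots> = x ^ (CHAR('a) ^ gcd a b)" using fr_mult_fix[OF assms(2)] by simp
  finally show ?thesis by simp
qed


lemma deg_sum_monoms:
  assumes "(c::nat) > 1" "d > 0"
  shows "degree (\<Sum>i<Suc k. monom (1::'a::field) (c ^ (d * i))) = c ^ (d * k)"
proof (induction k)
  case 0 thus ?case by (simp add: degree_monom_eq)
next
  case (Suc k)
  have lt: "c ^ (d * k) < c ^ (d * Suc k)" using assms by (intro power_strict_increasing) auto
  have "(\<Sum>i<Suc (Suc k). monom (1::'a) (c ^ (d * i))) =
        (\<Sum>i<Suc k. monom (1::'a) (c ^ (d * i))) + monom 1 (c ^ (d * Suc k))"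
    by simp
  also have "degree \<dots> = c ^ (d * Suc k)"
    using Suc lt by (subst degree_add_eq_right) (auto simp: degree_monom_eq)
  finally show ?case .
qed

lemma card_fixed:
  fixes dummy :: "'a::{field,finite}"
  assumes pc: "prime CHAR('a)" and oc: "odd CHAR('a)"
    and card: "card (UNIV :: 'a set) = CHAR('a) ^ m" and "d > 0" and "d dvd m"
  shows "card {x :: 'a. x ^ (CHAR('a) ^ d) = x} = CHAR('a) ^ d"
proof (rule antisym)
  define C where "C = CHAR('a)"
  have C1: "C > 1" using pc prime_gt_1_nat unfolding C_def by blast
  define Q :: "'a poly" where "Q = monom 1 (C ^ d) + [:0, -1:]"
  have Cd: "C ^ d > 1" using C1 \<open>d > 0\<close> by (metis one_less_power)
  have dQ: "degree Q = C ^ d"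
    unfolding Q_def using Cd by (subst degree_add_eq_left) (auto simp: degree_monom_eq)
  hence "Q \<noteq> 0" using Cd by (metis degree_0 not_less_zero less_trans zero_less_one)
  hence "card {x. poly Q x = 0} \<le> C ^ d" using card_poly_roots_bound dQ by metis
  moreover have "{x. poly Q x = 0} = {x :: 'a. x ^ (CHAR('a) ^ d) = x}"
    by (auto simp: Q_def poly_monom C_def)
  ultimately show "card {x :: 'a. x ^ (CHAR('a) ^ d) = x} \<le> CHAR('a) ^ d" by (simp add: C_def)
next
  define C where "C = CHAR('a)"
  have C1: "C > 1" using pc prime_gt_1_nat unfolding C_def by blast
  obtain k where mk: "m = d * k" using \<open>d dvd m\<close> by blast
  have c2: "card {0::'a, 1} \<le> card (UNIV :: 'a set)" by (rule card_mono) auto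
  have "k > 0" using mk card c2 by (cases "k = 0") auto
  then obtain k' where kk: "k = Suc k'" using gr0_implies_Suc by blast
  define D where "D = (\<lambda>x::'a. x ^ (C ^ d) - x)"
  define T where "T = (\<lambda>x::'a. \<Sum>i<k. x ^ (C ^ (d * i)))"
  define P :: "'a poly" where "P = (\<Sum>i<Suc k'. monom 1 (C ^ (d * i)))"
  have dP: "degree P = C ^ (d * k')" unfolding P_def using deg_sum_monoms C1 \<open>d > 0\<close> by blast
  hence "P \<noteq> 0" using C1 by (metis degree_0 not_one_le_zero one_le_power less_imp_le zero_neq_one power_eq_0_iff
        less_numeral_extra(4) le_zero_eq)
  hence bnd: "card {x. poly P x = 0} \<le> C ^ (d * k')" using card_poly_roots_bound dP by metis
  have polyP: "poly P x = T x" for x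
    unfolding P_def T_def kk by (simp add: poly_sum poly_monom)
  have TD: "T (D x) = 0" for x
  proof -
    have "T (D x) = (\<Sum>i<k. x ^ (C ^ (d * Suc i)) - x ^ (C ^ (d * i)))"
      unfolding T_def D_def C_def
      by (intro sum.cong refl) (simp add: fr_diff[OF pc oc] flip: power_mult power_add)
    also have "\<dots> = x ^ (C ^ (d * k)) - x"
      using sum_lessThan_telescope[of "\<lambda>i. x ^ (C ^ (d * i))" k] by simp
    also have "x ^ (C ^ (d * k)) = x" using fermat_ff[of x] card mk by (simp add: C_def)
    finally show ?thesis by simp
  qed
  have addD: "D (x + y) = D x + D y" for x y
    unfolding D_def C_def by (simp add: fr_add[OF pc])
  have "card (UNIV :: 'a set) = card (range D) * card {x. D x = 0}" by (rule ker_im) (rule addD)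
  moreover have "card (range D) \<le> card {x. poly P x = 0}"
    by (intro card_mono) (auto simp: polyP TD)
  ultimately have "C ^ (d * k') * C ^ d \<le> C ^ (d * k') * card {x. D x = 0}"
    using bnd card mk kk C_def
    by (metis (no_types, lifting) add.commute mult_le_mono1 mult_Suc_right power_add order_trans)
  hence "C ^ d \<le> card {x. D x = 0}" using C1 by simp
  moreover have "{x. D x = 0} = {x :: 'a. x ^ (CHAR('a) ^ d) = x}" by (auto simp: D_def C_def)
  ultimately show "CHAR('a) ^ d \<le> card {x :: 'a. x ^ (CHAR('a) ^ d) = x}" by (simp add: C_def)
qed


theorem lemma13:
  fixes p m u :: nat
  assumes "prime p" and "odd p" and "m > 0" and "u > 0"
    and "card (UNIV :: 'a::{field,finite} set) = p ^ m"
    and "(m div gcd m u) mod 4 = 0"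
  shows "card {c :: 'a. \<exists>x :: 'a. x ^ (p ^ (2 * u)) + x = c ^ (p ^ u)}
           = p ^ (m - 2 * gcd m u)"
proof -
  have Cp: "CHAR('a) = p" using char_eq assms(1,3,5) by blast
  define C where "C = CHAR('a)"
  have pc: "prime CHAR('a)" and oc: "odd CHAR('a)" using Cp assms by auto
  have card: "card (UNIV :: 'a set) = CHAR('a) ^ m" using Cp assms(5) by simp
  have C1: "C > 1" using pc prime_gt_1_nat unfolding C_def by blast
  define v where "v = gcd m u"
  have v0: "v > 0" using assms(3) v_def by simp
  obtain n where mn: "m = v * n" unfolding v_def by (metis gcd_dvd1 dvdE)
  obtain u' where uu: "u = v * u'" unfolding v_def by (metis gcd_dvd2 dvdE)
  have "m div v = n" using mn v0 by simp
  hence "4 dvd n" using assms(6) v_def by auto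
  then obtain n' where nn: "n = 4 * n'" by blast
  have "gcd m u = v * gcd n u'" using mn uu by (simp add: gcd_mult_distrib_nat)
  hence cop: "gcd n u' = 1" using v0 v_def assms(3) by auto
  have ou: "odd u'"
  proof
    assume "even u'"
    hence "2 dvd gcd n u'" using nn by simp
    thus False using cop by simp
  qed
  have g4: "gcd (4 * u) m = 4 * v"
  proof -
    have "gcd n' u' = 1" using cop nn by (metis coprime_commute coprime_iff_gcd_eq_1 coprime_mult_left_iff)
    hence "gcd (4 * u') (4 * n') = 4" by (simp add: gcd_mult_distrib_nat[symmetric] gcd.commute)
    thus ?thesis using mn uu nn by (simp add: gcd_mult_distrib_nat[symmetric] mult.left_commute)
  qed
  define w where "w = 2 * v"
  have w0: "w > 0" using v0 w_def by simp
  have wdvd: "w dvd m" "2 * w dvd m" using mn nn w_def by auto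
  define F where "F = (\<lambda>y::'a. y ^ (C ^ w))"
  define K where "K = {x::'a. x ^ (CHAR('a) ^ w) = x}"
  define E where "E = {x::'a. x ^ (CHAR('a) ^ (2 * w)) = x}"
  define N where "N = {x::'a. F x = - x}"
  have cK: "card K = C ^ w" unfolding K_def C_def using card_fixed[OF pc oc card w0 wdvd(1)] by simp
  have cE: "card E = C ^ (2 * w)" unfolding E_def C_def
    using card_fixed[OF pc oc card _ wdvd(2)] w0 by simp
  have Fadd: "F (x + y) = F x + F y" for x y unfolding F_def C_def by (rule fr_add[OF pc])
  have Fneg: "F (- x) = - F x" for x unfolding F_def C_def by (rule fr_neg[OF oc])
  have Fdiff: "F (x - y) = F x - F y" for x y unfolding F_def C_def by (rule fr_diff[OF pc oc])
  have two: "(2::'a) \<noteq> 0"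
  proof
    assume "(2::'a) = 0"
    hence "of_nat 2 = (0::'a)" by simp
    hence "CHAR('a) dvd 2" using of_nat_eq_0_iff_char_dvd by blast
    hence "CHAR('a) \<le> 2" by (rule dvd_imp_le) simp
    moreover have "CHAR('a) \<ge> 2" using pc prime_ge_2_nat by blast
    ultimately have "CHAR('a) = 2" by simp
    thus False using oc by simp
  qed
  have F2: "F 2 = 2" using Fadd[of 1 1] unfolding F_def by simp
  have Fhalf: "F (y / 2) = F y / 2" for y unfolding F_def using F2 unfolding F_def by (simp add: power_divide)
  have FF: "F (F x) = x ^ (CHAR('a) ^ (2 * w))" for x
    unfolding F_def C_def using fr_comp[of x w w] by (simp add: mult_2)
  have KE: "K \<subseteq> E"
  proof
    fix x assume "x \<in> K"
    hence "F x = x" unfolding K_def F_def C_def by simp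
    hence "F (F x) = x" by simp
    thus "x \<in> E" using FF unfolding E_def by simp
  qed
  have NE: "N \<subseteq> E"
  proof
    fix x assume "x \<in> N"
    hence "F x = - x" unfolding N_def by simp
    hence "F (F x) = x" using Fneg by simp
    thus "x \<in> E" using FF unfolding E_def by simp
  qed
  have i1: "((a + b + F (a + b)) / 2, (a + b - F (a + b)) / 2) = (a, b)" if "a \<in> K" "b \<in> N" for a b
  proof -
    have ab: "F a = a" "F b = - b" using that unfolding K_def N_def F_def C_def by auto
    show ?thesis using ab two Fadd[of a b] by (simp add: field_simps)
  qed
  have i2: "(x + F x) / 2 \<in> K \<and> (x - F x) / 2 \<in> N" if "x \<in> E" for x
  proof -
      have ffx: "F (F x) = x" using that FF unfolding E_def by simp
      have "F ((x + F x) / 2) = (x + F x) / 2" using Fhalf[of "x + F x"] Fadd[of x "F x"] ffx by (simp add: add.commute)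
      moreover have "F ((x - F x) / 2) = - ((x - F x) / 2)" using Fhalf[of "x - F x"] Fdiff[of x "F x"] ffx two by (simp add: field_simps)
      ultimately show ?thesis unfolding K_def N_def F_def C_def by simp
  qed
  have i3: "a + b \<in> E" if "a \<in> K" "b \<in> N" for a b
  proof -
      have ab: "F a = a" "F b = - b" using that unfolding K_def N_def F_def C_def by auto
      have "F (F (a + b)) = a + b" using ab Fadd[of a b] Fadd[of a "-b"] Fneg[of b] by simp
      thus "a + b \<in> E" using FF unfolding E_def by simp
  qed
  have i0: "(x + F x) / 2 + (x - F x) / 2 = x" for x
    using two by (simp add: field_simps)
  have bij: "bij_betw (\<lambda>x. ((x + F x) / 2, (x - F x) / 2)) E (K \<times> N)"
    by (rule bij_betw_byWitness[where f' = "\<lambda>(a, b). a + b"]) (use two i0 i1 i2 i3 in auto)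
  have "card E = card (K \<times> N)" by (rule bij_betw_same_card[OF bij])
  hence "C ^ w * C ^ w = C ^ w * card N" using cE cK by (simp add: card_cartesian_product mult_2 power_add)
  hence cN: "card N = C ^ w" using C1 by simp
  have negit: "x ^ (CHAR('a) ^ (w * j)) = (-1) ^ j * x" if "x \<in> N" for x j
  proof (induction j)
    case (Suc j)
    have "x ^ (CHAR('a) ^ (w * Suc j)) = (x ^ (CHAR('a) ^ w)) ^ (CHAR('a) ^ (w * j))"
      using fr_comp[of x w "w * j"] by simp
    also have "x ^ (CHAR('a) ^ w) = - x" using that unfolding N_def F_def C_def by simp
    also have "(- x) ^ (CHAR('a) ^ (w * j)) = - (x ^ (CHAR('a) ^ (w * j)))" by (rule fr_neg[OF oc])
    finally show ?case using Suc by simp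
  qed simp
  have oddit: "y ^ (CHAR('a) ^ (w * (2 * i + 1))) = y ^ (CHAR('a) ^ w)"
    if "y ^ (CHAR('a) ^ (2 * w)) = y" for y :: 'a and i
  proof (induction i)
    case (Suc i)
    have "y ^ (CHAR('a) ^ (w * (2 * Suc i + 1))) = (y ^ (CHAR('a) ^ (2 * w))) ^ (CHAR('a) ^ (w * (2 * i + 1)))"
      using fr_comp[of y "2 * w" "w * (2 * i + 1)"] by (simp add: algebra_simps)
    thus ?case using Suc that by simp
  qed simp
  obtain i where ui: "u' = 2 * i + 1" using ou oddE by blast
  have u2: "2 * u = w * u'" using uu w_def by simp
  define L where "L = (\<lambda>x::'a. x ^ (CHAR('a) ^ (2 * u)) + x)"
  have kerL1: "x \<in> N" if "L x = 0" for x
  proof -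
    have x1: "x ^ (CHAR('a) ^ (2 * u)) = - x" using that unfolding L_def by (simp add: eq_neg_iff_add_eq_0)
    have "x ^ (CHAR('a) ^ (2 * u + 2 * u)) = (x ^ (CHAR('a) ^ (2 * u))) ^ (CHAR('a) ^ (2 * u))"
      by (rule fr_comp)
    also have "\<dots> = x" using x1 fr_neg[OF oc, of x "2 * u"] by simp
    finally have "x ^ (CHAR('a) ^ (4 * u)) = x" by simp
    moreover have "x ^ (CHAR('a) ^ m) = x" using fermat_ff[of x] card by simp
    ultimately have "x ^ (CHAR('a) ^ gcd (4 * u) m) = x" by (rule fix_gcd)
    hence "x ^ (CHAR('a) ^ (2 * w)) = x" using g4 w_def by simp
    hence "x ^ (CHAR('a) ^ (w * u')) = x ^ (CHAR('a) ^ w)" using oddit ui by simp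
    thus "x \<in> N" using x1 u2 unfolding N_def F_def C_def by simp
  qed
  have kerL2: "L x = 0" if "x \<in> N" for x
  proof -
    from that have "x ^ (CHAR('a) ^ (2 * u)) = - x" using negit[of x u'] u2 ou by simp
    thus "L x = 0" unfolding L_def by simp
  qed
  have kerL: "{x. L x = 0} = N" using kerL1 kerL2 by blast
  have addL: "L (x + y) = L x + L y" for x y
    unfolding L_def by (simp add: fr_add[OF pc])
  have "card (UNIV :: 'a set) = card (range L) * card {x. L x = 0}" by (rule ker_im) (rule addL)
  hence eq: "C ^ m = card (range L) * C ^ w" using card kerL cN C_def by simp
  have wm: "w \<le> m" using wdvd(1) assms(3) by (simp add: dvd_imp_le)
  have "C ^ m = C ^ (m - w) * C ^ w" using wm by (simp flip: power_add)
  hence cL: "card (range L) = C ^ (m - w)" using eq C1 by simp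
  have injU: "inj (\<lambda>c::'a. c ^ (CHAR('a) ^ u))" by (intro injI) (rule fr_inj[OF pc oc])
  have surjU: "surj (\<lambda>c::'a. c ^ (CHAR('a) ^ u))" using finite_UNIV_inj_surj[OF _ injU] by simp
  have S: "{c :: 'a. \<exists>x :: 'a. x ^ (p ^ (2 * u)) + x = c ^ (p ^ u)} = (\<lambda>c. c ^ (CHAR('a) ^ u)) -` range L"
    unfolding L_def Cp by (auto simp: eq_commute)
  show ?thesis unfolding S using card_vimage_inj[OF injU] surjU cL C_def Cp w_def v_def by simp
qed

end
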